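(* Let $\tau$ be a topology on $\mathbb{R}$ such that $\tau_e\subset\tau$ and every nonempty $\tau$-open set has the Baire property and is non-meager (with respect to the Euclidean topology). Then every $\tau$-Świątkowski function $f\colon\mathbb{R}\to\mathbb{R}$ has the Baire property.
   Context: $\tau_e$ is the Euclidean topology on $\mathbb{R}$. For a topology $\tau$ on $\mathbb{R}$ and $f\colon\mathbb{R}\to\mathbb{R}$, $\mathrm{C}_\tau(f)$ is the set of points $x$ at which $f$ is continuous as a map from $(\mathbb{R},\tau)$ to $\mathbb{R}$ with the Euclidean topology. $f$ is a $\tau$-Świątkowski function if for all $a,b\in\mathbb{R}$ with $f(a)<f(b)$ there exists $x\in\mathrm{C}_\tau(f)$ lying strictly between $a$ and $b$ with $f(a)<f(x)<f(b)$. A function has the Baire property if preimages of open sets are of the form $O\triangle M$ with $O$ open and $M$ meager. *)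

theory Defs
  imports "HOL-Analysis.Analysis"
begin

definition nowhere_dense :: "real set \<Rightarrow> bool" where
  "nowhere_dense A \<longleftrightarrow> interior (closure A) = {}"

definition meager :: "real set \<Rightarrow> bool" where
  "meager A \<longleftrightarrow> (\<exists>F. countable F \<and> (\<forall>N\<in>F. nowhere_dense N) \<and> A \<subseteq> \<Union>F)"

definition baire_set :: "real set \<Rightarrow> bool" where
  "baire_set A \<longleftrightarrow> (\<exists>G M. open G \<and> meager M \<and> A = (G - M) \<union> (M - G))"

definition baire_fun :: "(real \<Rightarrow> real) \<Rightarrow> bool" where
  "baire_fun f \<longleftrightarrow> (\<forall>V. open V \<longrightarrow> baire_set (f -` V))"

definition cont_points :: "real topology \<Rightarrow> (real \<Rightarrow> real) \<Rightarrow> real set" where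
  "cont_points T f = {x. \<forall>V. open V \<and> f x \<in> V \<longrightarrow>
      (\<exists>U. openin T U \<and> x \<in> U \<and> f ` U \<subseteq> V)}"

definition swiatkowski :: "real topology \<Rightarrow> (real \<Rightarrow> real) \<Rightarrow> bool" where
  "swiatkowski T f \<longleftrightarrow> (\<forall>a b. f a < f b \<longrightarrow>
      (\<exists>x\<in>cont_points T f. min a b < x \<and> x < max a b \<and> f a < f x \<and> f x < f b))"

end

theory Submission
  imports Defs
begin

lemma meager_subset: "meager B \<Longrightarrow> A \<subseteq> B \<Longrightarrow> meager A"
proof -
  assume "meager B" "A \<subseteq> B"
  then obtain F where F: "countable F" "\<forall>N\<in>F. nowhere_dense N" "B \<subseteq> \<Union>F"
    unfolding meager_def by (elim exE conjE) simp
  then have "A \<subseteq> \<Union>F" using \<open>A \<subseteq> B\<close> by (rule_tac subset_trans) auto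
  then show ?thesis unfolding meager_def using F by (intro exI[of _ F]) simp
qed

lemma meager_Un: "meager A \<Longrightarrow> meager B \<Longrightarrow> meager (A \<union> B)"
proof -
  assume "meager A" "meager B"
  then obtain F1 F2 where F: "countable F1" "\<forall>N\<in>F1. nowhere_dense N" "A \<subseteq> \<Union>F1"
    "countable F2" "\<forall>N\<in>F2. nowhere_dense N" "B \<subseteq> \<Union>F2"
    unfolding meager_def by blast
  have "countable (F1 \<union> F2)" using F by simp
  moreover have "\<forall>N\<in>F1 \<union> F2. nowhere_dense N" using F by blast
  moreover have "A \<union> B \<subseteq> \<Union>(F1 \<union> F2)" using F by blast
  ultimately show ?thesis unfolding meager_def by blast
qed

lemma meager_nd: "nowhere_dense N \<Longrightarrow> meager N"
  unfolding meager_def by (intro exI[of _ "{N}"]) auto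

lemma meager_UN:
  assumes "\<And>n::nat. meager (A n)" shows "meager (\<Union>n. A n)"
proof -
  have "\<forall>n. \<exists>F. countable F \<and> (\<forall>N\<in>F. nowhere_dense N) \<and> A n \<subseteq> \<Union>F"
    using assms unfolding meager_def by blast
  from choice[OF this] obtain F where F: "\<forall>n. countable (F n) \<and> (\<forall>N\<in>F n. nowhere_dense N) \<and> A n \<subseteq> \<Union>(F n)"
    by blast
  have "countable (\<Union>n. F n)" using F by simp
  moreover have "\<forall>N\<in>(\<Union>n. F n). nowhere_dense N" using F by blast
  moreover have "(\<Union>n. A n) \<subseteq> \<Union>(\<Union>n. F n)"
  proof
    fix x assume "x \<in> (\<Union>n. A n)"
    then obtain n where "x \<in> A n" by blast
    then have "x \<in> \<Union>(F n)" using F by blast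
    then obtain N where "N \<in> F n" "x \<in> N" by blast
    then show "x \<in> \<Union>(\<Union>n. F n)" by blast
  qed
  ultimately show ?thesis unfolding meager_def by blast
qed

lemma nd_frontier:
  assumes "open G" shows "nowhere_dense (closure G - G)"
proof -
  have cl: "closed (closure G - G)" using assms by (simp add: closed_Diff)
  define S where "S = interior (closure G - G)"
  have "open S" "S \<subseteq> closure G - G" unfolding S_def using interior_subset by auto
  then have "S \<inter> G = {}" by blast
  then have "S \<inter> closure G = {}" using \<open>open S\<close> open_Int_closure_eq_empty by blast
  with \<open>S \<subseteq> closure G - G\<close> have "S = {}" by blast
  moreover have "closure (closure G - G) = closure G - G" using cl by (rule closure_closed)
  ultimately show ?thesis unfolding nowhere_dense_def S_def by simp
qed

theorem mainTheorem10:
  fixes T :: "real topology" and f :: "real \<Rightarrow> real"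
  assumes "topspace T = UNIV"
    and "\<forall>U. open U \<longrightarrow> openin T U"
    and "\<forall>U. openin T U \<and> U \<noteq> {} \<longrightarrow> baire_set U \<and> \<not> meager U"
    and "swiatkowski T f"
  shows "baire_fun f"
proof -
  define C where "C = cont_points T f"
  have dense: "\<exists>x\<in>C. a < x \<and> x < b" if ab: "a < b" for a b
  proof (cases "\<exists>u v. a < u \<and> u < b \<and> a < v \<and> v < b \<and> f u < f v")
    case True
    then obtain u v where uv: "a < u" "u < b" "a < v" "v < b" "f u < f v" by blast
    then obtain x where "x \<in> C" "min u v < x" "x < max u v"
      using assms(4) unfolding swiatkowski_def C_def by blast
    then show ?thesis using uv by (intro bexI[of _ x]) auto
  next
    case False
    define m where "m = (a + b) / 2"
    have m: "a < m" "m < b" using ab unfolding m_def by auto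
    have eq: "f u = f m" if "a < u" "u < b" for u
      proof -
      have H: "\<And>u v. a < u \<Longrightarrow> u < b \<Longrightarrow> a < v \<Longrightarrow> v < b \<Longrightarrow> \<not> f u < f v"
        using False by blast
      have "\<not> f u < f m" "\<not> f m < f u" using H[of u m] H[of m u] m that by auto
      then show ?thesis by linarith
    qed
    have "m \<in> C" unfolding C_def cont_points_def
    proof (intro CollectI allI impI)
      fix V :: "real set" assume VV: "open V \<and> f m \<in> V"
      then have "f m \<in> V" by blast
      show "\<exists>U. openin T U \<and> m \<in> U \<and> f ` U \<subseteq> V"
      proof (rule exI[of _ "{a<..<b}"], intro conjI)
        show "openin T {a<..<b}" using assms(2) by simp
        show "m \<in> {a<..<b}" using m by simp
        show "f ` {a<..<b} \<subseteq> V"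
        proof
          fix w assume "w \<in> f ` {a<..<b}"
          then obtain u where "a < u" "u < b" "w = f u" by auto
          then show "w \<in> V" using eq[of u] \<open>f m \<in> V\<close> by simp
        qed
      qed
    qed
    then show ?thesis using m by blast
  qed
  define Osc where "Osc n = \<Union>{U. openin T U \<and> (\<forall>y\<in>U. \<forall>z\<in>U. \<bar>f y - f z\<bar> < 1 / real (Suc n))}" for n
  have Oopen: "openin T (Osc n)" for n unfolding Osc_def by (rule openin_Union) auto
  have CO: "C \<subseteq> Osc n" for n
  proof
    fix x assume "x \<in> C"
    define e where "e = 1 / (2 * real (Suc n))"
    have e: "e > 0" unfolding e_def by auto
    obtain U where U: "openin T U" "x \<in> U" "f ` U \<subseteq> ball (f x) e"
      proof -
      have "open (ball (f x) e)" "f x \<in> ball (f x) e" using e by auto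
      moreover have "\<forall>V. open V \<and> f x \<in> V \<longrightarrow> (\<exists>U. openin T U \<and> x \<in> U \<and> f ` U \<subseteq> V)"
        using \<open>x \<in> C\<close> unfolding C_def cont_points_def by simp
      ultimately have "\<exists>U. openin T U \<and> x \<in> U \<and> f ` U \<subseteq> ball (f x) e" by simp
      then show ?thesis using that by blast
    qed
    have "\<bar>f y - f z\<bar> < 1 / real (Suc n)" if "y \<in> U" "z \<in> U" for y z
    proof -
      have "dist (f x) (f y) < e" "dist (f x) (f z) < e" using U that by auto
      then have "\<bar>f y - f z\<bar> < 2 * e" by (simp add: dist_real_def)
      moreover have "2 * e = 1 / real (Suc n)" unfolding e_def by (simp add: field_simps)
      ultimately show ?thesis by simp
    qed
    then show "x \<in> Osc n" unfolding Osc_def using U by blast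
  qed
  have OC: "x \<in> C" if H: "\<forall>n. x \<in> Osc n" for x
    unfolding C_def cont_points_def
  proof (intro CollectI allI impI)
    fix V :: "real set" assume VV: "open V \<and> f x \<in> V"
    then have "open V" "f x \<in> V" by blast+
    then obtain e where e: "e > 0" "ball (f x) e \<subseteq> V" by (meson open_contains_ball)
    then obtain n where n: "inverse (real (Suc n)) < e" using reals_Archimedean by blast
    obtain U where U: "openin T U" "x \<in> U" "\<forall>y\<in>U. \<forall>z\<in>U. \<bar>f y - f z\<bar> < 1 / real (Suc n)"
    proof -
      have "x \<in> Osc n" using H by simp
      then have "x \<in> \<Union>{U. openin T U \<and> (\<forall>y\<in>U. \<forall>z\<in>U. \<bar>f y - f z\<bar> < 1 / real (Suc n))}"
        unfolding Osc_def .
      then obtain U where "U \<in> {U. openin T U \<and> (\<forall>y\<in>U. \<forall>z\<in>U. \<bar>f y - f z\<bar> < 1 / real (Suc n))}" "x \<in> U"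
        by (rule UnionE)
      then show ?thesis using that[of U] by simp
    qed
    have "f ` U \<subseteq> ball (f x) e"
    proof
      fix w assume "w \<in> f ` U"
      then obtain y where "y \<in> U" "w = f y" by blast
      then have "\<bar>f x - f y\<bar> < 1 / real (Suc n)" using U by blast
      then show "w \<in> ball (f x) e" using n \<open>w = f y\<close> by (simp add: dist_real_def inverse_eq_divide)
    qed
    then show "\<exists>U. openin T U \<and> x \<in> U \<and> f ` U \<subseteq> V" using U e by blast
  qed
  have Cne: "C \<noteq> {}" using dense[of 0 1] by auto
  have mO: "meager (- Osc n)" for n
  proof -
    have "Osc n \<noteq> {}" using CO[of n] Cne by blast
    then have "baire_set (Osc n)" "\<not> meager (Osc n)" using assms(3) Oopen by auto
    then obtain G M where GM: "open G" "meager M" "Osc n = (G - M) \<union> (M - G)"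
      unfolding baire_set_def by blast
    have "- closure G = {}"
    proof (rule ccontr)
      assume "- closure G \<noteq> {}"
      then obtain x where x: "x \<in> - closure G" by blast
      have "open (- closure G)" by auto
      then obtain e where e: "e > 0" "ball x e \<subseteq> - closure G" using x open_contains_ball by blast
      obtain c where c: "c \<in> C" "x - e < c" "c < x + e" using dense[of "x - e" "x + e"] e by auto
      have "c \<in> ball x e" using c by (auto simp: dist_real_def)
      then have "c \<in> Osc n \<inter> - closure G" using c CO e by blast
      moreover have "openin T (Osc n \<inter> - closure G)"
        using Oopen assms(2) \<open>open (- closure G)\<close> by (simp add: openin_Int)
      ultimately have "\<not> meager (Osc n \<inter> - closure G)" using assms(3) by blast
      moreover have "Osc n \<inter> - closure G \<subseteq> M" using GM closure_subset by blast
      ultimately show False using meager_subset[OF GM(2)] by blast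
    qed
    then have "- Osc n \<subseteq> (closure G - G) \<union> M" using GM by blast
    moreover have "meager ((closure G - G) \<union> M)"
      using meager_Un[OF meager_nd[OF nd_frontier[OF GM(1)]] GM(2)] .
    ultimately show ?thesis using meager_subset by metis
  qed
  have mC: "meager (- C)"
  proof -
    have "- C \<subseteq> (\<Union>n. - Osc n)" using OC by blast
    then show ?thesis by (rule meager_subset[OF meager_UN[of "\<lambda>n. - Osc n", OF mO]])
  qed
  show ?thesis unfolding baire_fun_def
  proof (intro allI impI)
    fix V :: "real set" assume "open V"
    define E where "E = f -` V"
    define W where "W = \<Union>{U. openin T U \<and> U \<subseteq> E}"
    have Wo: "openin T W" unfolding W_def by (rule openin_Union) auto
    have "E - W \<subseteq> - C"
    proof
      fix x assume x: "x \<in> E - W"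
      show "x \<in> - C"
      proof
        assume "x \<in> C"
        moreover have "\<forall>V. open V \<and> f x \<in> V \<longrightarrow> (\<exists>U. openin T U \<and> x \<in> U \<and> f ` U \<subseteq> V)"
          using \<open>x \<in> C\<close> unfolding C_def cont_points_def by simp
        moreover have "f x \<in> V" using x unfolding E_def by simp
        ultimately obtain U where "openin T U" "x \<in> U" "f ` U \<subseteq> V"
          using \<open>open V\<close> by blast
        then have "U \<subseteq> E" unfolding E_def by auto
        with \<open>openin T U\<close> have "U \<subseteq> W" unfolding W_def by blast
        then show False using x \<open>x \<in> U\<close> by blast
      qed
    qed
    then have mN: "meager (E - W)" by (rule meager_subset[OF mC])
    show "baire_set (f -` V)"
    proof (cases "W = {}")
      case True
      then have "meager E" using mN by simp
      then show ?thesis unfolding baire_set_def E_def[symmetric]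
        by (intro exI[of _ "{}"] exI[of _ E]) auto
    next
      case False
      then have "baire_set W" using assms(3) Wo by blast
      then obtain G M where GM: "open G" "meager M" "W = (G - M) \<union> (M - G)"
        unfolding baire_set_def by blast
      have WE: "W \<subseteq> E" unfolding W_def by blast
      define M' where "M' = (E - G) \<union> (G - E)"
      have "M' \<subseteq> M \<union> (E - W)" unfolding M'_def using GM(3) WE by blast
      then have "meager M'" by (rule meager_subset[OF meager_Un[OF GM(2) mN]])
      moreover have "E = (G - M') \<union> (M' - G)" unfolding M'_def by blast
      ultimately show ?thesis unfolding baire_set_def E_def[symmetric]
        by (intro exI[of _ G] exI[of _ M'] conjI GM(1))
    qed
  qed
qed

end
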